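(* Let $F$ be any field, $N\in\mathbb{N}$, and $p,p'\in\mathbb{N}$ with $p+p'\le N+1$. Let $r\in\mathbb{N}$ satisfy $r+1\le p$ and $r+1\le p'$. Let $x\in F^{N+1}$. Then $\operatorname{rank}(H_{p,p'-1}(x))\le r$ if and only if $\operatorname{rank}(H_{p-1,p'}(x))\le r$.
   Context: $\mathbb{N}=\{0,1,2,\ldots\}$. For $N\in\mathbb{N}$, $x=(x_0,\ldots,x_N)\in F^{N+1}$ and integers $s,t\ge -1$ with $s+t\le N$, the Hankel matrix $H_{s,t}(x)$ is the $(s+1)\times(t+1)$ matrix $(x_{i+j})_{0\le i\le s,\,0\le j\le t}$. *)

theory Defs
  imports "Jordan_Normal_Form.DL_Rank"
begin

definition hankel :: "nat \<Rightarrow> nat \<Rightarrow> 'a vec \<Rightarrow> 'a mat" where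
  "hankel s t x = mat (s + 1) (t + 1) (\<lambda>(i, j). x $ (i + j))"

definition mat_rank :: "'a::field mat \<Rightarrow> nat" where
  "mat_rank A = vec_space.rank (dim_row A) A"

end

theory Submission
  imports Defs
begin

definition lc :: "nat \<Rightarrow> 'a::field vec list \<Rightarrow> 'a vec \<Rightarrow> bool" where
  "lc n ws v \<longleftrightarrow> dim_vec v = n \<and> (\<exists>c. \<forall>i<n. v $ i = (\<Sum>l<length ws. c l * ws ! l $ i))"

definition IB :: "nat \<Rightarrow> 'a::field vec set \<Rightarrow> nat \<Rightarrow> bool" where
  "IB n V k \<longleftrightarrow> (\<forall>U \<subseteq> V. LinearCombinations.module.lin_indpt class_ring (module_vec TYPE('a) n) U \<longrightarrow> card U \<le> k)"

definition SP :: "nat \<Rightarrow> 'a::field vec set \<Rightarrow> nat \<Rightarrow> bool" where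
  "SP n V k \<longleftrightarrow> (\<exists>ws. length ws \<le> k \<and> set ws \<subseteq> carrier_vec n \<and> (\<forall>v\<in>V. lc n ws v))"

context vec_space begin

lemma span_lc:
  assumes ws: "set ws \<subseteq> carrier_vec n"
  shows "v \<in> span (set ws) \<longleftrightarrow> lc n ws v"
proof
  assume "v \<in> span (set ws)"
  then have "v \<in> span_list ws" using span_list_as_span[OF ws] by simp
  then obtain c where v: "v = lincomb_list c ws" by (auto simp: span_list_def)
  have dws: "\<forall>w\<in>set ws. dim_vec w = n" using ws by auto
  have v2: "v = mat_of_cols n ws *\<^sub>v vec (length ws) c" using lincomb_list_as_mat_mult[OF dws] v by simp
  show "lc n ws v" unfolding lc_def
  proof (intro conjI exI allI impI)
    show "dim_vec v = n" using v2 by simp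
    fix i assume i: "i < n"
    show "v $ i = (\<Sum>l<length ws. c l * ws ! l $ i)"
      unfolding v2 using i
      by (auto simp: mult_mat_vec_def scalar_prod_def mat_of_cols_def lessThan_atLeast0 mult.commute intro!: sum.cong)
  qed
next
  assume "lc n ws v"
  then obtain c where d: "dim_vec v = n" and c: "\<forall>i<n. v $ i = (\<Sum>l<length ws. c l * ws ! l $ i)"
    unfolding lc_def by blast
  have dws: "\<forall>w\<in>set ws. dim_vec w = n" using ws by auto
  have "v = mat_of_cols n ws *\<^sub>v vec (length ws) c"
    using d c by (auto simp: mult_mat_vec_def scalar_prod_def mat_of_cols_def lessThan_atLeast0 mult.commute intro!: sum.cong eq_vecI)
  also have "\<dots> = lincomb_list c ws" using lincomb_list_as_mat_mult[OF dws] by simp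
  finally have "v \<in> span_list ws" by (auto simp: span_list_def)
  then show "v \<in> span (set ws)" using span_list_as_span[OF ws] by simp
qed

lemma lin_indpt_empty: "lin_indpt {}"
  by (rule finite_lin_indpt2) auto

lemma SP_IB:
  fixes X :: "'a vec set"
  assumes "finite X" "X \<subseteq> carrier_vec n" "SP n X k"
  shows "IB n X k"
  unfolding IB_def
proof (intro allI impI)
  fix U assume U1: "U \<subseteq> X" and U2: "lin_indpt U"
  have U: "U \<subseteq> X \<and> lin_indpt U" using U1 U2 by simp
  obtain ws where ws: "length ws \<le> k" "set ws \<subseteq> carrier_vec n" "\<forall>v\<in>X. lc n ws v"
    using assms(3) unfolding SP_def by blast
  have sub: "U \<subseteq> span (set ws)" using U ws span_lc[OF ws(2)] by auto
  have fU: "finite U" using U assms(1) finite_subset by blast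
  from replacement[OF fU List.finite_set ws(2) conjunct2[OF U] sub]
  have "card U \<le> card (set ws)" by (elim exE conjE) linarith
  also have "\<dots> \<le> k" using ws(1) card_length order_trans by blast
  finally show "card U \<le> k" .
qed

lemma max_indpt_exists:
  fixes X :: "'a vec set"
  assumes "finite X"
  obtains S where "maximal S (\<lambda>T. T \<subseteq> X \<and> lin_indpt T)" "finite S"
  using maximal_exists_superset[of X "\<lambda>T. T \<subseteq> X \<and> lin_indpt T" "{}"] assms lin_indpt_empty
  by auto

lemma max_indpt_spans:
  fixes X :: "'a vec set"
  assumes "X \<subseteq> carrier_vec n" "maximal S (\<lambda>T. T \<subseteq> X \<and> lin_indpt T)"
  shows "X \<subseteq> span S"
proof
  fix v assume v: "v \<in> X"
  have S: "S \<subseteq> X" "lin_indpt S" using assms(2) unfolding maximal_def by auto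
  have SC: "S \<subseteq> carrier_vec n" using S assms(1) by auto
  show "v \<in> span S"
  proof (rule ccontr)
    assume nv: "v \<notin> span S"
    have "v \<notin> S" using nv in_own_span[OF SC] by auto
    then have "lin_indpt (S \<union> {v})" using lin_dep_iff_in_span[OF SC S(2)] nv v assms(1) by auto
    then have "S \<union> {v} = S" using assms(2) S v unfolding maximal_def by blast
    then show False using \<open>v \<notin> S\<close> by auto
  qed
qed

lemma IB_SP:
  fixes X :: "'a vec set"
  assumes "finite X" "X \<subseteq> carrier_vec n" "IB n X k"
  shows "SP n X k"
proof -
  obtain S where S: "maximal S (\<lambda>T. T \<subseteq> X \<and> lin_indpt T)" "finite S"
    using max_indpt_exists[OF assms(1)] by blast
  have Ssub: "S \<subseteq> X" "lin_indpt S" using S unfolding maximal_def by auto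
  have "card S \<le> k" using assms(3) Ssub unfolding IB_def by auto
  obtain ws where ws: "set ws = S" "distinct ws" using finite_distinct_list[OF S(2)] by blast
  have len: "length ws \<le> k" using ws \<open>card S \<le> k\<close> distinct_card by metis
  have wsC: "set ws \<subseteq> carrier_vec n" using ws Ssub assms(2) by auto
  have "X \<subseteq> span (set ws)" using max_indpt_spans[OF assms(2) S(1)] ws by simp
  then show ?thesis unfolding SP_def using len wsC span_lc[OF wsC] by blast
qed

lemma rank_IB:
  fixes A :: "'a mat"
  assumes A: "A \<in> carrier_mat n m"
  shows "rank A \<le> k \<longleftrightarrow> IB n (set (cols A)) k"
proof -
  obtain S where S: "maximal S (\<lambda>T. T \<subseteq> set (cols A) \<and> lin_indpt T)" "finite S"
    using max_indpt_exists[of "set (cols A)"] by blast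
  have r: "rank A = card S" using rank_card_indpt[OF A S(1)] .
  show ?thesis
  proof
    assume "rank A \<le> k"
    show "IB n (set (cols A)) k" unfolding IB_def
    proof (intro allI impI)
      fix U assume "U \<subseteq> set (cols A)" "lin_indpt U"
      then have "card U \<le> rank A" using rank_ge_card_indpt[OF A] by blast
      then show "card U \<le> k" using \<open>rank A \<le> k\<close> by linarith
    qed
  next
    assume "IB n (set (cols A)) k"
    then show "rank A \<le> k" unfolding IB_def r using S(1) unfolding maximal_def by blast
  qed
qed

lemma IB_step:
  fixes X :: "'a vec set"
  assumes X: "set As = X" "X \<subseteq> carrier_vec n" and c: "c \<in> carrier_vec n" "\<not> lc n As c"
    and ib: "IB n (insert c X) k"
  shows "1 \<le> k \<and> IB n X (k - 1)"
proof -
  have AsC: "set As \<subseteq> carrier_vec n" using X by simp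
  have nsp: "c \<notin> span X" using span_lc[OF AsC] c X by simp
  have key: "card U + 1 \<le> k" if U: "U \<subseteq> X" "lin_indpt U" for U
  proof -
    have UC: "U \<subseteq> carrier_vec n" using U X by auto
    have fU: "finite U" using U(1) X(1) finite_subset by blast
    have "span U \<subseteq> span X" using span_is_monotone[OF U(1)] .
    then have cU: "c \<notin> span U" using nsp by auto
    have "c \<notin> U" using cU in_own_span[OF UC] by auto
    then have li: "lin_indpt (U \<union> {c})" using lin_dep_iff_in_span[OF UC U(2) c(1)] cU by auto
    have "U \<union> {c} \<subseteq> insert c X" using U by auto
    then have "card (U \<union> {c}) \<le> k" using ib li unfolding IB_def by blast
    then show ?thesis using \<open>c \<notin> U\<close> fU by simp
  qed
  have "1 \<le> k" using key[of "{}"] lin_indpt_empty by simp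
  moreover have "IB n X (k - 1)" unfolding IB_def
  proof (intro allI impI)
    fix U assume "U \<subseteq> X" "lin_indpt U"
    then show "card U \<le> k - 1" using key[of U] by simp
  qed
  ultimately show ?thesis by simp
qed

end

lemma mat_rank_IB:
  fixes A :: "'a::field mat"
  assumes "A \<in> carrier_mat n m"
  shows "mat_rank A \<le> k \<longleftrightarrow> IB n (set (cols A)) k"
  using vec_space.rank_IB[OF assms] assms unfolding mat_rank_def by auto

lemma IB_SP_iff:
  fixes X :: "'a::field vec set"
  assumes "finite X" "X \<subseteq> carrier_vec n"
  shows "IB n X k \<longleftrightarrow> SP n X k"
  using vec_space.IB_SP[OF assms] vec_space.SP_IB[OF assms] by blast

lemma lc_trans:
  assumes us: "\<forall>u\<in>set us. lc n ws u" and v: "lc n us v"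
  shows "lc n ws v"
proof -
  obtain e where dv: "dim_vec v = n" and e: "\<forall>i<n. v $ i = (\<Sum>l<length us. e l * us ! l $ i)"
    using v unfolding lc_def by blast
  have "\<forall>l\<in>{..<length us}. \<exists>g. \<forall>i<n. us ! l $ i = (\<Sum>q<length ws. g q * ws ! q $ i)"
  proof
    fix l assume "l \<in> {..<length us}"
    then have "us ! l \<in> set us" by simp
    with us show "\<exists>g. \<forall>i<n. us ! l $ i = (\<Sum>q<length ws. g q * ws ! q $ i)" unfolding lc_def by blast
  qed
  from bchoice[OF this] obtain G where G0: "\<forall>l\<in>{..<length us}. \<forall>i<n. us ! l $ i = (\<Sum>q<length ws. G l q * ws ! q $ i)"
    by blast
  have G: "\<And>l i. l < length us \<Longrightarrow> i < n \<Longrightarrow> us ! l $ i = (\<Sum>q<length ws. G l q * ws ! q $ i)"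
    using G0 by blast
  show ?thesis unfolding lc_def
  proof (intro conjI exI allI impI)
    show "dim_vec v = n" by (rule dv)
    fix i assume i: "i < n"
    have "v $ i = (\<Sum>l<length us. e l * (\<Sum>q<length ws. G l q * ws ! q $ i))"
      using e i G by simp
    also have "\<dots> = (\<Sum>l<length us. \<Sum>q<length ws. e l * G l q * ws ! q $ i)"
      by (simp add: sum_distrib_left mult.assoc)
    also have "\<dots> = (\<Sum>q<length ws. \<Sum>l<length us. e l * G l q * ws ! q $ i)"
      by (rule sum.swap)
    also have "\<dots> = (\<Sum>q<length ws. (\<Sum>l<length us. e l * G l q) * ws ! q $ i)"
      by (simp add: sum_distrib_right)
    finally show "v $ i = (\<Sum>q<length ws. (\<Sum>l<length us. e l * G l q) * ws ! q $ i)" .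
  qed
qed

lemma lc_cons:
  assumes "lc n ws v" shows "lc n (w # ws) v"
proof -
  obtain c where d: "dim_vec v = n" and c: "\<forall>i<n. v $ i = (\<Sum>l<length ws. c l * ws ! l $ i)"
    using assms unfolding lc_def by blast
  show ?thesis unfolding lc_def
  proof (intro conjI exI allI impI)
    show "dim_vec v = n" by (rule d)
    fix i assume "i < n"
    then show "v $ i = (\<Sum>l<length (w # ws). (\<lambda>l. if l = 0 then 0 else c (l - 1)) l * (w # ws) ! l $ i)"
      using c by (simp only: length_Cons sum.lessThan_Suc_shift) simp
  qed
qed

lemma lc_head:
  assumes "dim_vec w = n" shows "lc n (w # ws) w"
  unfolding lc_def
proof (intro conjI exI allI impI)
  show "dim_vec w = n" by (rule assms)
  fix i assume "i < n"
  show "w $ i = (\<Sum>l<length (w # ws). (\<lambda>l. if l = 0 then 1 else 0) l * (w # ws) ! l $ i)"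
    by (simp only: length_Cons sum.lessThan_Suc_shift) simp
qed

lemma lc_restrict:
  assumes "lc n ws v" "L + off \<le> n"
  shows "lc L (map (\<lambda>w. vec L (\<lambda>i. w $ (i + off))) ws) (vec L (\<lambda>i. v $ (i + off)))"
proof -
  obtain c where c: "\<forall>i<n. v $ i = (\<Sum>l<length ws. c l * ws ! l $ i)"
    using assms(1) unfolding lc_def by blast
  show ?thesis unfolding lc_def
  proof (intro conjI exI allI impI)
    show "dim_vec (vec L (\<lambda>i. v $ (i + off))) = L" by simp
    fix i assume i: "i < L"
    have "vec L (\<lambda>i. v $ (i + off)) $ i = (\<Sum>l<length ws. c l * ws ! l $ (i + off))"
      using i c assms(2) by simp
    also have "\<dots> = (\<Sum>l<length (map (\<lambda>w. vec L (\<lambda>i. w $ (i + off))) ws).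
        c l * map (\<lambda>w. vec L (\<lambda>i. w $ (i + off))) ws ! l $ i)"
      using i by (auto intro!: sum.cong)
    finally show "vec L (\<lambda>i. v $ (i + off)) $ i = (\<Sum>l<length (map (\<lambda>w. vec L (\<lambda>i. w $ (i + off))) ws).
        c l * map (\<lambda>w. vec L (\<lambda>i. w $ (i + off))) ws ! l $ i)" .
  qed
qed

definition cv :: "nat \<Rightarrow> (nat \<Rightarrow> 'a) \<Rightarrow> nat \<Rightarrow> 'a vec" where
  "cv L x j = vec L (\<lambda>i. x (i + j))"

lemma F:
  fixes x :: "nat \<Rightarrow> 'a::field"
  shows "IB (Suc p) (cv (Suc p) x ` {..<m}) k \<Longrightarrow> k < m \<Longrightarrow> SP p (cv p x ` {..m}) k"
proof (induction m arbitrary: k)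
  case 0
  then show ?case by simp
next
  case (Suc m)
  define As where "As = map (cv (Suc p) x) [0..<m]"
  have setAs: "set As = cv (Suc p) x ` {..<m}" unfolding As_def by (auto simp: lessThan_atLeast0)
  have ins: "cv (Suc p) x ` {..<Suc m} = insert (cv (Suc p) x m) (cv (Suc p) x ` {..<m})"
    by (simp add: lessThan_Suc)
  have carr: "cv (Suc p) x ` {..<m} \<subseteq> carrier_vec (Suc p)" by (auto simp: cv_def)
  have c: "cv (Suc p) x m \<in> carrier_vec (Suc p)" by (simp add: cv_def)
  show ?case
  proof (cases "lc (Suc p) As (cv (Suc p) x m)")
    case True
    have "SP (Suc p) (cv (Suc p) x ` {..<Suc m}) k"
      using Suc.prems(1) IB_SP_iff[of "cv (Suc p) x ` {..<Suc m}" "Suc p" k] carr c ins by simp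
    then obtain ws where ws: "length ws \<le> k" "set ws \<subseteq> carrier_vec (Suc p)"
      "\<forall>v\<in>cv (Suc p) x ` {..<Suc m}. lc (Suc p) ws v" unfolding SP_def by blast
    define ws' where "ws' = map (\<lambda>w. vec p (\<lambda>i. w $ (i + 0))) ws"
    have r: "lc p ws' (cv p x j)" if j: "j \<le> m" for j
    proof -
      have "lc (Suc p) ws (cv (Suc p) x j)" using ws(3) j by auto
      from lc_restrict[OF this, of p 0]
      have "lc p ws' (vec p (\<lambda>i. cv (Suc p) x j $ (i + 0)))" unfolding ws'_def by simp
      moreover have "vec p (\<lambda>i. cv (Suc p) x j $ (i + 0)) = cv p x j"
        by (auto simp: cv_def)
      ultimately show ?thesis by simp
    qed
    obtain e where e: "\<forall>i<Suc p. cv (Suc p) x m $ i = (\<Sum>l<length As. e l * As ! l $ i)"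
      using True unfolding lc_def by blast
    have last0: "lc p (map (\<lambda>l. cv p x (Suc l)) [0..<m]) (cv p x (Suc m))"
      unfolding lc_def
    proof (intro conjI exI allI impI)
      show "dim_vec (cv p x (Suc m)) = p" by (simp add: cv_def)
      fix i assume i: "i < p"
      have "cv p x (Suc m) $ i = cv (Suc p) x m $ Suc i" using i by (simp add: cv_def)
      also have "\<dots> = (\<Sum>l<m. e l * As ! l $ Suc i)" using e i by (simp add: As_def)
      also have "\<dots> = (\<Sum>l<length (map (\<lambda>l. cv p x (Suc l)) [0..<m]). e l * map (\<lambda>l. cv p x (Suc l)) [0..<m] ! l $ i)"
        using i by (auto simp: As_def cv_def intro!: sum.cong)
      finally show "cv p x (Suc m) $ i = (\<Sum>l<length (map (\<lambda>l. cv p x (Suc l)) [0..<m]). e l * map (\<lambda>l. cv p x (Suc l)) [0..<m] ! l $ i)" .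
    qed
    have last: "lc p ws' (cv p x (Suc m))"
      by (rule lc_trans[OF _ last0]) (auto intro: r)
    show ?thesis unfolding SP_def
    proof (intro exI conjI)
      show "length ws' \<le> k" using ws(1) by (simp add: ws'_def)
      show "set ws' \<subseteq> carrier_vec p" by (auto simp: ws'_def)
      show "\<forall>v\<in>cv p x ` {..Suc m}. lc p ws' v"
        using r last le_Suc_eq by auto
    qed
  next
    case False
    have st: "1 \<le> k \<and> IB (Suc p) (cv (Suc p) x ` {..<m}) (k - 1)"
      using vec_space.IB_step[OF setAs carr c False] Suc.prems(1) ins by simp
    have "k - 1 < m" using st Suc.prems(2) by linarith
    then have "SP p (cv p x ` {..m}) (k - 1)" using Suc.IH[of "k - 1"] st by simp
    then obtain ws where ws: "length ws \<le> k - 1" "set ws \<subseteq> carrier_vec p"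
      "\<forall>v\<in>cv p x ` {..m}. lc p ws v" unfolding SP_def by blast
    show ?thesis unfolding SP_def
    proof (intro exI conjI)
      show "length (cv p x (Suc m) # ws) \<le> k" using ws(1) st by (simp; linarith)
      show "set (cv p x (Suc m) # ws) \<subseteq> carrier_vec p" using ws(2) by (simp add: cv_def)
      show "\<forall>v\<in>cv p x ` {..Suc m}. lc p (cv p x (Suc m) # ws) v"
      proof
        fix v assume "v \<in> cv p x ` {..Suc m}"
        then obtain j where j: "j \<le> Suc m" "v = cv p x j" by auto
        show "lc p (cv p x (Suc m) # ws) v"
        proof (cases "j = Suc m")
          case True
          then show ?thesis using j lc_head[of "cv p x (Suc m)" p] by (simp add: cv_def)
        next
          case False
          then have "j \<le> m" using j by simp
          then have "lc p ws v" using ws(3) j by auto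
          then show ?thesis by (rule lc_cons)
        qed
      qed
    qed
  qed
qed

lemma SP_transpose:
  fixes A :: "'a::field mat"
  assumes A: "A \<in> carrier_mat n m" and sp: "SP n (set (cols A)) k"
  shows "SP m (set (cols (transpose_mat A))) k"
proof -
  obtain ws where ws: "length ws \<le> k" "set ws \<subseteq> carrier_vec n" "\<forall>v\<in>set (cols A). lc n ws v"
    using sp unfolding SP_def by blast
  have "\<forall>j\<in>{..<m}. \<exists>g. \<forall>i<n. col A j $ i = (\<Sum>l<length ws. g l * ws ! l $ i)"
  proof
    fix j assume "j \<in> {..<m}"
    then have "col A j \<in> set (cols A)" using A by (auto simp: cols_def)
    with ws(3) show "\<exists>g. \<forall>i<n. col A j $ i = (\<Sum>l<length ws. g l * ws ! l $ i)" unfolding lc_def by blast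
  qed
  from bchoice[OF this] obtain C where C0: "\<forall>j\<in>{..<m}. \<forall>i<n. col A j $ i = (\<Sum>l<length ws. C j l * ws ! l $ i)"
    by blast
  define ws2 where "ws2 = map (\<lambda>l. vec m (\<lambda>j. C j l)) [0..<length ws]"
  show ?thesis unfolding SP_def
  proof (intro exI conjI)
    show "length ws2 \<le> k" using ws(1) by (simp add: ws2_def)
    show "set ws2 \<subseteq> carrier_vec m" by (auto simp: ws2_def)
    show "\<forall>v\<in>set (cols (transpose_mat A)). lc m ws2 v"
    proof
      fix v assume "v \<in> set (cols (transpose_mat A))"
      then obtain i where i: "i < n" "v = col (transpose_mat A) i" using A by (auto simp: cols_def)
      show "lc m ws2 v" unfolding lc_def
      proof (intro conjI exI allI impI)
        show "dim_vec v = m" using i A by simp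
        fix j assume j: "j < m"
        have "v $ j = A $$ (i, j)" using i j A by simp
        also have "\<dots> = col A j $ i" using i j A by simp
        also have "\<dots> = (\<Sum>l<length ws. C j l * ws ! l $ i)" using C0 i j by simp
        also have "\<dots> = (\<Sum>l<length ws2. ws ! l $ i * ws2 ! l $ j)"
          using j by (auto simp: ws2_def mult.commute intro!: sum.cong)
        finally show "v $ j = (\<Sum>l<length ws2. (\<lambda>l. ws ! l $ i) l * ws2 ! l $ j)" by simp
      qed
    qed
  qed
qed

lemma finite_cols_carrier:
  assumes "A \<in> carrier_mat n m"
  shows "finite (set (cols A))" "set (cols A) \<subseteq> carrier_vec n"
  using assms by (auto simp: cols_def)

lemma mat_rank_SP:
  fixes A :: "'a::field mat"
  assumes "A \<in> carrier_mat n m"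
  shows "mat_rank A \<le> k \<longleftrightarrow> SP n (set (cols A)) k"
  using mat_rank_IB[OF assms] IB_SP_iff[OF finite_cols_carrier[OF assms]] by simp

lemma mat_rank_transpose_le:
  fixes A :: "'a::field mat"
  assumes "mat_rank A \<le> k"
  shows "mat_rank (transpose_mat A) \<le> k"
proof -
  have A: "A \<in> carrier_mat (dim_row A) (dim_col A)" by simp
  have At: "transpose_mat A \<in> carrier_mat (dim_col A) (dim_row A)" by simp
  show ?thesis using SP_transpose[OF A] assms mat_rank_SP[OF A] mat_rank_SP[OF At] by simp
qed

lemma hankel_transpose: "transpose_mat (hankel s t x) = hankel t s x"
  by (rule eq_matI) (auto simp: hankel_def add.commute)

lemma hankel_carrier: "hankel s t x \<in> carrier_mat (Suc s) (Suc t)"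
  by (simp add: hankel_def)

lemma hankel_cols: "set (cols (hankel s t x)) = cv (Suc s) (\<lambda>i. x $ i) ` {..<Suc t}"
proof -
  have d: "dim_col (hankel s t x) = Suc t" by (simp add: hankel_def)
  have "set (cols (hankel s t x)) = (\<lambda>j. col (hankel s t x) j) ` {..<Suc t}"
    unfolding cols_def d set_map set_upt atLeast0LessThan ..
  also have "\<dots> = cv (Suc s) (\<lambda>i. x $ i) ` {..<Suc t}"
    by (rule image_cong) (auto simp: hankel_def cv_def)
  finally show ?thesis .
qed

lemma fwd:
  fixes x :: "'a::field vec"
  assumes "1 \<le> p" "r < q" "mat_rank (hankel p (q - 1) x) \<le> r"
  shows "mat_rank (hankel (p - 1) q x) \<le> r"
proof -
  have q: "Suc (q - 1) = q" using assms(2) by simp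
  have p: "Suc (p - 1) = p" using assms(1) by simp
  have "IB (Suc p) (cv (Suc p) (\<lambda>i. x $ i) ` {..<q}) r"
    using mat_rank_IB[OF hankel_carrier] assms(3) hankel_cols[of p "q - 1" x] q by metis
  from F[OF this assms(2)]
  have "SP p (cv p (\<lambda>i. x $ i) ` {..q}) r" .
  then have "SP (Suc (p - 1)) (set (cols (hankel (p - 1) q x))) r"
    using hankel_cols[of "p - 1" q x] p lessThan_Suc_atMost by simp
  then show ?thesis using mat_rank_SP[OF hankel_carrier] by blast
qed

theorem lemma9:
  fixes N p p' r :: nat and x :: "'a::field vec"
  assumes "dim_vec x = N + 1"
    and "p + p' \<le> N + 1"
    and "r + 1 \<le> p" and "r + 1 \<le> p'"
  shows "mat_rank (hankel p (p' - 1) x) \<le> r \<longleftrightarrow> mat_rank (hankel (p - 1) p' x) \<le> r"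
proof
  assume "mat_rank (hankel p (p' - 1) x) \<le> r"
  then show "mat_rank (hankel (p - 1) p' x) \<le> r" using fwd[of p r p' x] assms by simp
next
  assume "mat_rank (hankel (p - 1) p' x) \<le> r"
  then have "mat_rank (hankel p' (p - 1) x) \<le> r"
    using mat_rank_transpose_le hankel_transpose by metis
  then have "mat_rank (hankel (p' - 1) p x) \<le> r" using fwd[of p' r p x] assms by simp
  then show "mat_rank (hankel p (p' - 1) x) \<le> r"
    using mat_rank_transpose_le hankel_transpose by metis
qed

end
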